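(* Let $\mathfrak{g}$ be a $\mathrm{Lie}$-nilpotent Leibniz algebra of class $k\ge2$ and let $0\to\mathfrak{r}\to\mathfrak{f}\to\mathfrak{g}\to0$ be a free presentation of $\mathfrak{g}$. Then there is a natural exact sequence $$0\to\frac{\mathfrak{f}^{[k+1]}}{[\mathfrak{f},\mathfrak{r}]_{\mathrm{Lie}}\cap\mathfrak{f}^{[k+1]}}\to\mathcal{M}^{\mathrm{Lie}}(\mathfrak{g})\to\mathcal{M}^{\mathrm{Lie}}\big(\mathfrak{g}/\mathfrak{g}^{[k]}\big)\to\mathfrak{g}^{[k]}\to0.$$
   Context: Fix a field $\mathbb{K}$ with $\frac12\in\mathbb{K}$. A Leibniz algebra is a $\mathbb{K}$-vector space with a bilinear bracket satisfying $[x,[y,z]]=[[x,y],z]-[[x,z],y]$. For two-sided ideals $\mathfrak{m},\mathfrak{n}$, $[\mathfrak{m},\mathfrak{n}]_{\mathrm{Lie}}$ is the subspace spanned by all $[m,n]+[n,m]$. The lower $\mathrm{Lie}$-central series of a Leibniz algebra $\mathfrak{h}$ is $\mathfrak{h}^{[1]}=\mathfrak{h}$, $\mathfrak{h}^{[i]}=[\mathfrak{h}^{[i-1]},\mathfrak{h}]_{\mathrm{Lie}}$; $\mathfrak{h}$ is $\mathrm{Lie}$-nilpotent of class $k$ if $\mathfrak{h}^{[k+1]}=0$ and $\mathfrak{h}^{[k]}\neq0$. A free presentation is $0\to\mathfrak{r}\to\mathfrak{f}\to\mathfrak{g}\to0$ with $\mathfrak{f}$ free Leibniz. The Schur $\mathrm{Lie}$-multiplier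 is $\mathcal{M}^{\mathrm{Lie}}(\mathfrak{g})=\frac{\mathfrak{r}\cap[\mathfrak{f},\mathfrak{f}]_{\mathrm{Lie}}}{[\mathfrak{f},\mathfrak{r}]_{\mathrm{Lie}}}$, independent of the presentation up to isomorphism. *)

theory Defs
  imports Main
begin

record ('k, 'v) leib =
  lcar  :: "'v set"
  ladd  :: "'v \<Rightarrow> 'v \<Rightarrow> 'v"
  lzero :: "'v"
  lneg  :: "'v \<Rightarrow> 'v"
  lsmul :: "'k \<Rightarrow> 'v \<Rightarrow> 'v"
  lbr   :: "'v \<Rightarrow> 'v \<Rightarrow> 'v"

definition leibniz_algebra :: "('k::field, 'v) leib \<Rightarrow> bool" where
  "leibniz_algebra L \<longleftrightarrow>
     lzero L \<in> lcar L \<and>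
     (\<forall>x\<in>lcar L. \<forall>y\<in>lcar L. ladd L x y \<in> lcar L) \<and>
     (\<forall>x\<in>lcar L. lneg L x \<in> lcar L) \<and>
     (\<forall>a. \<forall>x\<in>lcar L. lsmul L a x \<in> lcar L) \<and>
     (\<forall>x\<in>lcar L. \<forall>y\<in>lcar L. lbr L x y \<in> lcar L) \<and>
     (\<forall>x\<in>lcar L. \<forall>y\<in>lcar L. \<forall>z\<in>lcar L. ladd L (ladd L x y) z = ladd L x (ladd L y z)) \<and>
     (\<forall>x\<in>lcar L. \<forall>y\<in>lcar L. ladd L x y = ladd L y x) \<and>
     (\<forall>x\<in>lcar L. ladd L x (lzero L) = x) \<and>
     (\<forall>x\<in>lcar L. ladd L x (lneg L x) = lzero L) \<and>
     (\<forall>a b. \<forall>x\<in>lcar L. lsmul L (a + b) x = ladd L (lsmul L a x) (lsmul L b x)) \<and>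
     (\<forall>a. \<forall>x\<in>lcar L. \<forall>y\<in>lcar L. lsmul L a (ladd L x y) = ladd L (lsmul L a x) (lsmul L a y)) \<and>
     (\<forall>a b. \<forall>x\<in>lcar L. lsmul L (a * b) x = lsmul L a (lsmul L b x)) \<and>
     (\<forall>x\<in>lcar L. lsmul L 1 x = x) \<and>
     (\<forall>x\<in>lcar L. \<forall>y\<in>lcar L. \<forall>z\<in>lcar L. lbr L (ladd L x y) z = ladd L (lbr L x z) (lbr L y z)) \<and>
     (\<forall>x\<in>lcar L. \<forall>y\<in>lcar L. \<forall>z\<in>lcar L. lbr L x (ladd L y z) = ladd L (lbr L x y) (lbr L x z)) \<and>
     (\<forall>a. \<forall>x\<in>lcar L. \<forall>y\<in>lcar L. lbr L (lsmul L a x) y = lsmul L a (lbr L x y)) \<and>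
     (\<forall>a. \<forall>x\<in>lcar L. \<forall>y\<in>lcar L. lbr L x (lsmul L a y) = lsmul L a (lbr L x y)) \<and>
     \<comment> \<open>Leibniz identity  [x,[y,z]] = [[x,y],z] - [[x,z],y]\<close>
     (\<forall>x\<in>lcar L. \<forall>y\<in>lcar L. \<forall>z\<in>lcar L.
        lbr L x (lbr L y z) = ladd L (lbr L (lbr L x y) z) (lneg L (lbr L (lbr L x z) y)))"

definition leib_hom :: "('k::field, 'v) leib \<Rightarrow> ('k, 'w) leib \<Rightarrow> ('v \<Rightarrow> 'w) \<Rightarrow> bool" where
  "leib_hom L M h \<longleftrightarrow>
     h ` lcar L \<subseteq> lcar M \<and>
     (\<forall>x\<in>lcar L. \<forall>y\<in>lcar L. h (ladd L x y) = ladd M (h x) (h y)) \<and>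
     (\<forall>a. \<forall>x\<in>lcar L. h (lsmul L a x) = lsmul M a (h x)) \<and>
     (\<forall>x\<in>lcar L. \<forall>y\<in>lcar L. h (lbr L x y) = lbr M (h x) (h y))"

text \<open>Freeness by the universal property, tested against all Leibniz algebras whose
  underlying type is the same as that of the candidate free algebra.\<close>
definition free_on :: "('k::field, 'v) leib \<Rightarrow> 'v set \<Rightarrow> bool" where
  "free_on L X \<longleftrightarrow> leibniz_algebra L \<and> X \<subseteq> lcar L \<and>
     (\<forall>(M :: ('k, 'v) leib) \<phi>. leibniz_algebra M \<and> \<phi> ` X \<subseteq> lcar M \<longrightarrow>
        (\<exists>h. leib_hom L M h \<and> (\<forall>x\<in>X. h x = \<phi> x)) \<and>
        (\<forall>h1 h2. leib_hom L M h1 \<and> leib_hom L M h2 \<and> (\<forall>x\<in>X. h1 x = \<phi> x) \<and> (\<forall>x\<in>X. h2 x = \<phi> x)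
            \<longrightarrow> (\<forall>y\<in>lcar L. h1 y = h2 y)))"

definition free_leib :: "('k::field, 'v) leib \<Rightarrow> bool" where
  "free_leib L \<longleftrightarrow> (\<exists>X. free_on L X)"

definition lsubspace :: "('k::field, 'v) leib \<Rightarrow> 'v set \<Rightarrow> bool" where
  "lsubspace L W \<longleftrightarrow> W \<subseteq> lcar L \<and> lzero L \<in> W \<and>
     (\<forall>x\<in>W. \<forall>y\<in>W. ladd L x y \<in> W) \<and> (\<forall>a. \<forall>x\<in>W. lsmul L a x \<in> W)"

definition lspan :: "('k::field, 'v) leib \<Rightarrow> 'v set \<Rightarrow> 'v set" where
  "lspan L S = \<Inter>{W. lsubspace L W \<and> S \<subseteq> W}"

definition lideal :: "('k::field, 'v) leib \<Rightarrow> 'v set \<Rightarrow> bool" where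
  "lideal L I \<longleftrightarrow> lsubspace L I \<and>
     (\<forall>x\<in>lcar L. \<forall>i\<in>I. lbr L x i \<in> I \<and> lbr L i x \<in> I)"

definition lie_br :: "('k::field, 'v) leib \<Rightarrow> 'v set \<Rightarrow> 'v set \<Rightarrow> 'v set" where
  "lie_br L M N = lspan L {ladd L (lbr L m n) (lbr L n m) | m n. m \<in> M \<and> n \<in> N}"

fun lcs0 :: "('k::field, 'v) leib \<Rightarrow> nat \<Rightarrow> 'v set" where
  "lcs0 L 0 = lcar L"
| "lcs0 L (Suc n) = lie_br L (lcs0 L n) (lcar L)"

text \<open>\<open>lie_lcs L i\<close> is \<open>L^[i]\<close> (for \<open>i \<ge> 1\<close>): \<open>L^[1] = L\<close>, \<open>L^[i] = [L^[i-1], L]_Lie\<close>.\<close>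
definition lie_lcs :: "('k::field, 'v) leib \<Rightarrow> nat \<Rightarrow> 'v set" where
  "lie_lcs L i = lcs0 L (i - 1)"

definition lie_nilpotent_class :: "('k::field, 'v) leib \<Rightarrow> nat \<Rightarrow> bool" where
  "lie_nilpotent_class L k \<longleftrightarrow> lie_lcs L (k + 1) = {lzero L} \<and> lie_lcs L k \<noteq> {lzero L}"

definition lcoset :: "('k::field, 'v) leib \<Rightarrow> 'v set \<Rightarrow> 'v \<Rightarrow> 'v set" where
  "lcoset L B x = {ladd L x b | b. b \<in> B}"

definition lquot :: "('k::field, 'v) leib \<Rightarrow> 'v set \<Rightarrow> 'v set \<Rightarrow> 'v set set" where
  "lquot L A B = lcoset L B ` A"

definition quot_alg :: "('k::field, 'v) leib \<Rightarrow> 'v set \<Rightarrow> ('k, 'v set) leib" where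
  "quot_alg L I =
     \<lparr> lcar = lquot L (lcar L) I,
       ladd = (\<lambda>C D. lcoset L I (ladd L (SOME x. x \<in> C) (SOME y. y \<in> D))),
       lzero = lcoset L I (lzero L),
       lneg = (\<lambda>C. lcoset L I (lneg L (SOME x. x \<in> C))),
       lsmul = (\<lambda>a C. lcoset L I (lsmul L a (SOME x. x \<in> C))),
       lbr = (\<lambda>C D. lcoset L I (lbr L (SOME x. x \<in> C) (SOME y. y \<in> D))) \<rparr>"

definition lkernel :: "('k::field, 'v) leib \<Rightarrow> ('k, 'w) leib \<Rightarrow> ('v \<Rightarrow> 'w) \<Rightarrow> 'v set" where
  "lkernel F G \<pi> = {x \<in> lcar F. \<pi> x = lzero G}"

definition free_presentation :: "('k::field, 'v) leib \<Rightarrow> ('k, 'w) leib \<Rightarrow> ('v \<Rightarrow> 'w) \<Rightarrow> bool" where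
  "free_presentation F G \<pi> \<longleftrightarrow> leibniz_algebra F \<and> free_leib F \<and> leibniz_algebra G \<and>
     leib_hom F G \<pi> \<and> \<pi> ` lcar F = lcar G"

definition schur_lie :: "('k::field, 'v) leib \<Rightarrow> ('k, 'w) leib \<Rightarrow> ('v \<Rightarrow> 'w) \<Rightarrow> 'v set set" where
  "schur_lie F G \<pi> =
     lquot F (lkernel F G \<pi> \<inter> lie_br F (lcar F) (lcar F)) (lie_br F (lcar F) (lkernel F G \<pi>))"

end

theory Submission
  imports Defs
begin


locale lalg =
  fixes L :: "('k::field, 'v) leib"
  assumes LA: "leibniz_algebra L"
begin

lemma c_zero_ax: "lzero L \<in> lcar L" using LA unfolding leibniz_algebra_def by (elim conjE) assumption
lemmas c_zero[simp] = c_zero_ax[rule_format]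
lemma c_add_ax: "\<forall>x\<in>lcar L. \<forall>y\<in>lcar L. ladd L x y \<in> lcar L" using LA unfolding leibniz_algebra_def by (elim conjE) assumption
lemmas c_add[simp] = c_add_ax[rule_format]
lemma c_neg_ax: "\<forall>x\<in>lcar L. lneg L x \<in> lcar L" using LA unfolding leibniz_algebra_def by (elim conjE) assumption
lemmas c_neg[simp] = c_neg_ax[rule_format]
lemma c_smul_ax: "\<forall>a. \<forall>x\<in>lcar L. lsmul L a x \<in> lcar L" using LA unfolding leibniz_algebra_def by (elim conjE) assumption
lemmas c_smul[simp] = c_smul_ax[rule_format]
lemma c_br_ax: "\<forall>x\<in>lcar L. \<forall>y\<in>lcar L. lbr L x y \<in> lcar L" using LA unfolding leibniz_algebra_def by (elim conjE) assumption
lemmas c_br[simp] = c_br_ax[rule_format]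
lemma add_assoc_ax: "\<forall>x\<in>lcar L. \<forall>y\<in>lcar L. \<forall>z\<in>lcar L. ladd L (ladd L x y) z = ladd L x (ladd L y z)" using LA unfolding leibniz_algebra_def by (elim conjE) assumption
lemmas add_assoc = add_assoc_ax[rule_format]
lemma add_comm_ax: "\<forall>x\<in>lcar L. \<forall>y\<in>lcar L. ladd L x y = ladd L y x" using LA unfolding leibniz_algebra_def by (elim conjE) assumption
lemmas add_comm = add_comm_ax[rule_format]
lemma add_zero_ax: "\<forall>x\<in>lcar L. ladd L x (lzero L) = x" using LA unfolding leibniz_algebra_def by (elim conjE) assumption
lemmas add_zero[simp] = add_zero_ax[rule_format]
lemma add_neg_ax: "\<forall>x\<in>lcar L. ladd L x (lneg L x) = lzero L" using LA unfolding leibniz_algebra_def by (elim conjE) assumption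
lemmas add_neg[simp] = add_neg_ax[rule_format]
lemma smul_adds_ax: "\<forall>a b. \<forall>x\<in>lcar L. lsmul L (a + b) x = ladd L (lsmul L a x) (lsmul L b x)" using LA unfolding leibniz_algebra_def by (elim conjE) assumption
lemmas smul_adds = smul_adds_ax[rule_format]
lemma smul_add_ax: "\<forall>a. \<forall>x\<in>lcar L. \<forall>y\<in>lcar L. lsmul L a (ladd L x y) = ladd L (lsmul L a x) (lsmul L a y)" using LA unfolding leibniz_algebra_def by (elim conjE) assumption
lemmas smul_add = smul_add_ax[rule_format]
lemma smul_mult_ax: "\<forall>a b. \<forall>x\<in>lcar L. lsmul L (a * b) x = lsmul L a (lsmul L b x)" using LA unfolding leibniz_algebra_def by (elim conjE) assumption
lemmas smul_mult = smul_mult_ax[rule_format]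
lemma smul_one_ax: "\<forall>x\<in>lcar L. lsmul L 1 x = x" using LA unfolding leibniz_algebra_def by (elim conjE) assumption
lemmas smul_one[simp] = smul_one_ax[rule_format]
lemma br_addl_ax: "\<forall>x\<in>lcar L. \<forall>y\<in>lcar L. \<forall>z\<in>lcar L. lbr L (ladd L x y) z = ladd L (lbr L x z) (lbr L y z)" using LA unfolding leibniz_algebra_def by (elim conjE) assumption
lemmas br_addl = br_addl_ax[rule_format]
lemma br_addr_ax: "\<forall>x\<in>lcar L. \<forall>y\<in>lcar L. \<forall>z\<in>lcar L. lbr L x (ladd L y z) = ladd L (lbr L x y) (lbr L x z)" using LA unfolding leibniz_algebra_def by (elim conjE) assumption
lemmas br_addr = br_addr_ax[rule_format]
lemma br_smull_ax: "\<forall>a. \<forall>x\<in>lcar L. \<forall>y\<in>lcar L. lbr L (lsmul L a x) y = lsmul L a (lbr L x y)" using LA unfolding leibniz_algebra_def by (elim conjE) assumption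
lemmas br_smull = br_smull_ax[rule_format]
lemma br_smulr_ax: "\<forall>a. \<forall>x\<in>lcar L. \<forall>y\<in>lcar L. lbr L x (lsmul L a y) = lsmul L a (lbr L x y)" using LA unfolding leibniz_algebra_def by (elim conjE) assumption
lemmas br_smulr = br_smulr_ax[rule_format]
lemma leib_ax: "\<forall>x\<in>lcar L. \<forall>y\<in>lcar L. \<forall>z\<in>lcar L. lbr L x (lbr L y z) = ladd L (lbr L (lbr L x y) z) (lneg L (lbr L (lbr L x z) y))" using LA unfolding leibniz_algebra_def by (elim conjE) assumption
lemmas leib = leib_ax[rule_format]

lemma zero_add[simp]: "x \<in> lcar L \<Longrightarrow> ladd L (lzero L) x = x"
  using add_comm[of "lzero L" x] by simp
lemma neg_add[simp]: "x \<in> lcar L \<Longrightarrow> ladd L (lneg L x) x = lzero L"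
  using add_comm[of "lneg L x" x] by simp
lemma add_comm_left: "x \<in> lcar L \<Longrightarrow> y \<in> lcar L \<Longrightarrow> z \<in> lcar L \<Longrightarrow> ladd L x (ladd L y z) = ladd L y (ladd L x z)"
proof -
  assume a: "x \<in> lcar L" "y \<in> lcar L" "z \<in> lcar L"
  have "ladd L x (ladd L y z) = ladd L (ladd L x y) z" by (rule add_assoc[symmetric]) (fact a)+
  also have "\<dots> = ladd L (ladd L y x) z" using add_comm[OF a(1,2)] by simp
  also have "\<dots> = ladd L y (ladd L x z)" by (rule add_assoc) (fact a)+
  finally show ?thesis .
qed
lemma add_cancel: assumes "x \<in> lcar L" "y \<in> lcar L" "z \<in> lcar L" "ladd L x y = ladd L x z" shows "y = z"
proof -
  have "y = ladd L (ladd L (lneg L x) x) y" using assms by simp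
  also have "\<dots> = ladd L (lneg L x) (ladd L x y)" by (rule add_assoc) (simp_all add: assms)
  also have "\<dots> = ladd L (ladd L (lneg L x) x) z" unfolding assms(4) by (rule add_assoc[symmetric]) (simp_all add: assms)
  also have "\<dots> = z" using assms by simp
  finally show ?thesis .
qed
lemma smul_zero_sc[simp]: assumes "x \<in> lcar L" shows "lsmul L 0 x = lzero L"
proof -
  have "ladd L (lsmul L 0 x) (lsmul L 0 x) = ladd L (lsmul L 0 x) (lzero L)"
    using assms smul_adds[of x 0 0] by simp
  from add_cancel[OF _ _ _ this] show ?thesis using assms by simp
qed
lemma smul_zero[simp]: "lsmul L a (lzero L) = lzero L"
proof -
  have "lsmul L a (lzero L) = lsmul L a (lsmul L 0 (lzero L))" by simp
  also have "\<dots> = lsmul L (a * 0) (lzero L)" by (rule smul_mult[symmetric]) simp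
  also have "\<dots> = lzero L" by simp
  finally show ?thesis .
qed
lemma neg_unique: assumes "x \<in> lcar L" "y \<in> lcar L" "ladd L x y = lzero L" shows "y = lneg L x"
  using add_cancel[of x y "lneg L x"] assms by simp
lemma smul_m1: assumes "x \<in> lcar L" shows "lsmul L (-1) x = lneg L x"
proof -
  have "ladd L x (lsmul L (-1) x) = lsmul L (1 + -1) x" using assms smul_adds[of x 1 "-1"] by simp
  hence "ladd L x (lsmul L (-1) x) = lzero L" using assms by simp
  thus ?thesis by (rule neg_unique[OF assms c_smul[OF assms]])
qed
lemma neg_neg[simp]: "x \<in> lcar L \<Longrightarrow> lneg L (lneg L x) = x"
  by (rule neg_unique[symmetric]) simp_all
lemma neg_zero[simp]: "lneg L (lzero L) = lzero L"
  by (rule neg_unique[symmetric]) simp_all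
lemma swap4: "a \<in> lcar L \<Longrightarrow> b \<in> lcar L \<Longrightarrow> c \<in> lcar L \<Longrightarrow> d \<in> lcar L \<Longrightarrow>
  ladd L (ladd L a b) (ladd L c d) = ladd L (ladd L a c) (ladd L b d)"
  by (simp add: add_assoc add_comm_left)
lemma neg_add_distrib: assumes "x \<in> lcar L" "y \<in> lcar L" shows "lneg L (ladd L x y) = ladd L (lneg L x) (lneg L y)"
proof -
  have "lneg L (ladd L x y) = lsmul L (-1) (ladd L x y)" by (rule smul_m1[symmetric]) (simp add: assms)
  also have "\<dots> = ladd L (lsmul L (-1) x) (lsmul L (-1) y)" by (rule smul_add) (fact assms)+
  also have "\<dots> = ladd L (lneg L x) (lneg L y)" using assms by (simp add: smul_m1)
  finally show ?thesis .
qed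
lemma br_zero_l[simp]: "x \<in> lcar L \<Longrightarrow> lbr L (lzero L) x = lzero L"
  using br_smull[of "lzero L" x 0] by simp
lemma br_zero_r[simp]: "x \<in> lcar L \<Longrightarrow> lbr L x (lzero L) = lzero L"
  using br_smulr[of x "lzero L" 0] by simp
lemma br_neg_l: "x \<in> lcar L \<Longrightarrow> y \<in> lcar L \<Longrightarrow> lbr L (lneg L x) y = lneg L (lbr L x y)"
  using br_smull[of x y "-1"] by (simp add: smul_m1)
lemma br_neg_r: "x \<in> lcar L \<Longrightarrow> y \<in> lcar L \<Longrightarrow> lbr L x (lneg L y) = lneg L (lbr L x y)"
  using br_smulr[of x y "-1"] by (simp add: smul_m1)
lemma add_neg_cancel2: "x \<in> lcar L \<Longrightarrow> y \<in> lcar L \<Longrightarrow> ladd L (ladd L y x) (lneg L y) = x"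
  using add_comm[of y x] add_assoc[of x y "lneg L y"] by simp
lemma add_neg_cancel3: "x \<in> lcar L \<Longrightarrow> y \<in> lcar L \<Longrightarrow> ladd L y (ladd L x (lneg L y)) = x"
  using add_comm_left[of y x "lneg L y"] by simp

lemma sub_car: "lsubspace L W \<Longrightarrow> W \<subseteq> lcar L" unfolding lsubspace_def by blast
lemma sub_zero: "lsubspace L W \<Longrightarrow> lzero L \<in> W" unfolding lsubspace_def by blast
lemma sub_add: "lsubspace L W \<Longrightarrow> x \<in> W \<Longrightarrow> y \<in> W \<Longrightarrow> ladd L x y \<in> W" unfolding lsubspace_def by blast
lemma sub_smul: "lsubspace L W \<Longrightarrow> x \<in> W \<Longrightarrow> lsmul L a x \<in> W" unfolding lsubspace_def by blast
lemma sub_neg: "lsubspace L W \<Longrightarrow> x \<in> W \<Longrightarrow> lneg L x \<in> W"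
  using sub_smul[of W x "-1"] smul_m1[of x] sub_car[of W] by auto
lemma car_sub: "lsubspace L (lcar L)" unfolding lsubspace_def by auto
lemma sub_inter: "lsubspace L A \<Longrightarrow> lsubspace L B \<Longrightarrow> lsubspace L (A \<inter> B)"
  unfolding lsubspace_def by auto
lemma span_least: "lsubspace L W \<Longrightarrow> S \<subseteq> W \<Longrightarrow> lspan L S \<subseteq> W"
  unfolding lspan_def by blast
lemma span_inc: "S \<subseteq> lspan L S" unfolding lspan_def by blast
lemma span_sub: assumes "S \<subseteq> lcar L" shows "lsubspace L (lspan L S)"
proof -
  have ne: "lcar L \<in> {W. lsubspace L W \<and> S \<subseteq> W}" using car_sub assms by blast
  define F where "F = {W. lsubspace L W \<and> S \<subseteq> W}"
  have ne': "lcar L \<in> F" using ne unfolding F_def .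
  have sp: "\<And>W. W \<in> F \<Longrightarrow> lsubspace L W" unfolding F_def by blast
  have "lsubspace L (\<Inter>F)" unfolding lsubspace_def
  proof (intro conjI ballI allI)
    show "\<Inter>F \<subseteq> lcar L" using ne' by (rule Inter_lower)
    show "lzero L \<in> \<Inter>F" by (rule InterI) (rule sub_zero[OF sp])
  next
    fix x y assume "x \<in> \<Inter>F" "y \<in> \<Inter>F"
    thus "ladd L x y \<in> \<Inter>F" by (intro InterI) (rule sub_add[OF sp]; blast)
  next
    fix a x assume "x \<in> \<Inter>F"
    thus "lsmul L a x \<in> \<Inter>F" by (intro InterI) (rule sub_smul[OF sp]; blast)
  qed
  thus ?thesis unfolding lspan_def F_def .
qed

definition ssum :: "'v set \<Rightarrow> 'v set \<Rightarrow> 'v set" where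
  "ssum A B = {ladd L a b | a b. a \<in> A \<and> b \<in> B}"

lemma sub_ssum: assumes A: "lsubspace L A" and B: "lsubspace L B" shows "lsubspace L (ssum A B)"
proof -
  have Ac: "A \<subseteq> lcar L" and Bc: "B \<subseteq> lcar L" using sub_car A B by auto
  have mem: "ladd L a b \<in> ssum A B" if "a \<in> A" "b \<in> B" for a b
    unfolding ssum_def using that by blast
  have el: "\<exists>a b. x = ladd L a b \<and> a \<in> A \<and> b \<in> B" if "x \<in> ssum A B" for x
    using that unfolding ssum_def by blast
  show ?thesis unfolding lsubspace_def
  proof (intro conjI ballI allI)
    show "ssum A B \<subseteq> lcar L"
    proof
      fix x assume "x \<in> ssum A B"
      then obtain a b where "x = ladd L a b" "a \<in> A" "b \<in> B" using el by blast
      thus "x \<in> lcar L" using Ac Bc c_add by blast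
    qed
    have "ladd L (lzero L) (lzero L) \<in> ssum A B" using mem sub_zero A B by blast
    thus "lzero L \<in> ssum A B" by simp
  next
    fix x y assume "x \<in> ssum A B" "y \<in> ssum A B"
    then obtain a b a' b' where e: "x = ladd L a b" "y = ladd L a' b'" and m: "a \<in> A" "b \<in> B" "a' \<in> A" "b' \<in> B"
      using el by meson
    have c: "a \<in> lcar L" "b \<in> lcar L" "a' \<in> lcar L" "b' \<in> lcar L" using m Ac Bc by auto
    have "ladd L x y = ladd L (ladd L a a') (ladd L b b')" unfolding e by (rule swap4) (fact c)+
    moreover have "ladd L (ladd L a a') (ladd L b b') \<in> ssum A B"
      by (rule mem) (rule sub_add, fact, fact, fact)+
    ultimately show "ladd L x y \<in> ssum A B" by simp
  next
    fix c x assume "x \<in> ssum A B"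
    then obtain a b where e: "x = ladd L a b" and m: "a \<in> A" "b \<in> B" using el by meson
    have cc: "a \<in> lcar L" "b \<in> lcar L" using m Ac Bc by auto
    have "lsmul L c x = ladd L (lsmul L c a) (lsmul L c b)" unfolding e by (rule smul_add) (fact cc)+
    moreover have "ladd L (lsmul L c a) (lsmul L c b) \<in> ssum A B"
      by (rule mem) (rule sub_smul, fact, fact)+
    ultimately show "lsmul L c x \<in> ssum A B" by simp
  qed
qed

lemma cos_self: assumes B: "lsubspace L B" and x: "x \<in> lcar L" shows "x \<in> lcoset L B x"
proof -
  have "ladd L x (lzero L) \<in> lcoset L B x" unfolding lcoset_def using sub_zero[OF B] by blast
  thus ?thesis using x by simp
qed
lemma cos_mem: "z \<in> lcoset L B x \<longleftrightarrow> (\<exists>c\<in>B. z = ladd L x c)"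
  unfolding lcoset_def by blast
lemma cos_absorb: assumes B: "lsubspace L B" and x: "x \<in> lcar L" and b: "b \<in> B"
  shows "lcoset L B (ladd L x b) = lcoset L B x"
proof -
  have bc: "b \<in> lcar L" using b sub_car[OF B] by blast
  show ?thesis
  proof (intro set_eqI iffI)
    fix z assume "z \<in> lcoset L B (ladd L x b)"
    then obtain c where zc: "z = ladd L (ladd L x b) c" "c \<in> B" unfolding cos_mem by blast
    have cc: "c \<in> lcar L" using zc sub_car[OF B] by blast
    have "z = ladd L x (ladd L b c)" unfolding zc(1) by (rule add_assoc) (fact x bc cc)+
    moreover have "ladd L b c \<in> B" using sub_add[OF B b zc(2)] .
    ultimately show "z \<in> lcoset L B x" unfolding cos_mem by blast
  next
    fix z assume "z \<in> lcoset L B x"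
    then obtain c where c: "z = ladd L x c" "c \<in> B" unfolding cos_mem by blast
    have cc: "c \<in> lcar L" using c sub_car[OF B] by blast
    have e1: "ladd L (ladd L x b) (ladd L (lneg L b) c) = ladd L x (ladd L b (ladd L (lneg L b) c))"
      by (rule add_assoc) (simp_all add: x bc cc)
    have "ladd L b (ladd L (lneg L b) c) = ladd L (ladd L b (lneg L b)) c"
      by (rule add_assoc[symmetric]) (simp_all add: bc cc)
    hence e2: "ladd L b (ladd L (lneg L b) c) = c" using bc cc by simp
    have "z = ladd L (ladd L x b) (ladd L (lneg L b) c)" using e1 e2 c by simp
    moreover have "ladd L (lneg L b) c \<in> B" using sub_add[OF B sub_neg[OF B b] c(2)] .
    ultimately show "z \<in> lcoset L B (ladd L x b)" unfolding cos_mem by blast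
  qed
qed
lemma cos_eq_iff: assumes B: "lsubspace L B" and x: "x \<in> lcar L" and y: "y \<in> lcar L"
  shows "lcoset L B x = lcoset L B y \<longleftrightarrow> ladd L x (lneg L y) \<in> B"
proof
  assume "lcoset L B x = lcoset L B y"
  then have "x \<in> lcoset L B y" using cos_self[OF B x] by simp
  then obtain b where b: "x = ladd L y b" "b \<in> B" unfolding lcoset_def by blast
  have "b \<in> lcar L" using b sub_car[OF B] by blast
  then have "ladd L x (lneg L y) = b" using b y add_neg_cancel2 by simp
  thus "ladd L x (lneg L y) \<in> B" using b by simp
next
  assume h: "ladd L x (lneg L y) \<in> B"
  have e: "ladd L y (ladd L x (lneg L y)) = x" using x y add_neg_cancel3 by simp
  from cos_absorb[OF B y h] show "lcoset L B x = lcoset L B y" unfolding e .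
qed
lemma cos_some: assumes B: "lsubspace L B" and x: "x \<in> lcar L"
  obtains b where "b \<in> B" "(SOME z. z \<in> lcoset L B x) = ladd L x b"
proof -
  define s where "s = (SOME z. z \<in> lcoset L B x)"
  have "s \<in> lcoset L B x" unfolding s_def using cos_self[OF B x] by (rule someI)
  then obtain b where b: "b \<in> B" "s = ladd L x b" unfolding cos_mem by blast
  from b(1) b(2)[unfolded s_def] show ?thesis by (rule that)
qed
lemma cos_some_cos: assumes B: "lsubspace L B" and B': "lsubspace L B'" and sub: "B' \<subseteq> B" and x: "x \<in> lcar L"
  shows "lcoset L B (SOME z. z \<in> lcoset L B' x) = lcoset L B x"
proof -
  obtain b where b: "b \<in> B'" "(SOME z. z \<in> lcoset L B' x) = ladd L x b" by (rule cos_some[OF B' x])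
  have "b \<in> B" using b(1) sub by blast
  from cos_absorb[OF B x this] show ?thesis unfolding b(2) .
qed

end



context lalg begin

abbreviation symb :: "'v \<Rightarrow> 'v \<Rightarrow> 'v" where
  "symb m n \<equiv> ladd L (lbr L m n) (lbr L n m)"

lemma lie_br_sub: "M \<subseteq> lcar L \<Longrightarrow> N \<subseteq> lcar L \<Longrightarrow> lsubspace L (lie_br L M N)"
  unfolding lie_br_def by (rule span_sub) (auto intro!: c_add c_br)
lemma lie_br_gen: "m \<in> M \<Longrightarrow> n \<in> N \<Longrightarrow> symb m n \<in> lie_br L M N"
  unfolding lie_br_def by (rule subsetD[OF span_inc]) blast
lemma lie_br_le: "lsubspace L I \<Longrightarrow> (\<And>m n. m \<in> M \<Longrightarrow> n \<in> N \<Longrightarrow> symb m n \<in> I) \<Longrightarrow> lie_br L M N \<subseteq> I"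
  unfolding lie_br_def by (rule span_least) auto
lemma lie_br_mono: "M \<subseteq> M' \<Longrightarrow> N \<subseteq> N' \<Longrightarrow> M' \<subseteq> lcar L \<Longrightarrow> N' \<subseteq> lcar L \<Longrightarrow> lie_br L M N \<subseteq> lie_br L M' N'"
  by (rule lie_br_le[OF lie_br_sub]) (auto intro: lie_br_gen)
lemma symb_comm: "m \<in> lcar L \<Longrightarrow> n \<in> lcar L \<Longrightarrow> symb m n = symb n m"
  by (rule add_comm) auto

lemma left_ann: assumes "x \<in> lcar L" "m \<in> lcar L" "n \<in> lcar L"
  shows "lbr L x (symb m n) = lzero L"
proof -
  define a where "a = lbr L (lbr L x m) n"
  define b where "b = lbr L (lbr L x n) m"
  have ab: "a \<in> lcar L" "b \<in> lcar L" using assms unfolding a_def b_def by auto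
  have "lbr L x (symb m n) = ladd L (lbr L x (lbr L m n)) (lbr L x (lbr L n m))"
    using assms by (simp add: br_addr)
  also have "\<dots> = ladd L (ladd L a (lneg L b)) (ladd L b (lneg L a))"
    using assms unfolding a_def b_def by (simp add: leib)
  also have "\<dots> = ladd L (ladd L a b) (ladd L (lneg L b) (lneg L a))"
    by (rule swap4) (simp_all add: ab)
  also have "\<dots> = ladd L (ladd L a b) (lneg L (ladd L a b))"
    using ab by (simp add: neg_add_distrib add_comm[of "lneg L a"])
  also have "\<dots> = lzero L" using ab by simp
  finally show ?thesis .
qed

lemma right_der0: assumes "x \<in> lcar L" "m \<in> lcar L" "n \<in> lcar L"
  shows "lbr L (lbr L m n) x = ladd L (lbr L m (lbr L n x)) (lbr L (lbr L m x) n)"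
proof -
  have c: "lbr L (lbr L m n) x \<in> lcar L" "lbr L (lbr L m x) n \<in> lcar L" using assms by auto
  have "ladd L (lbr L m (lbr L n x)) (lbr L (lbr L m x) n) =
        ladd L (ladd L (lbr L (lbr L m n) x) (lneg L (lbr L (lbr L m x) n))) (lbr L (lbr L m x) n)"
    using assms by (simp add: leib)
  also have "\<dots> = lbr L (lbr L m n) x" using c by (simp add: add_assoc)
  finally show ?thesis by simp
qed

lemma right_der: assumes "x \<in> lcar L" "m \<in> lcar L" "n \<in> lcar L"
  shows "lbr L (symb m n) x = ladd L (symb (lbr L m x) n) (symb m (lbr L n x))"
proof -
  define A where "A = lbr L m (lbr L n x)"
  define B where "B = lbr L (lbr L m x) n"
  define C where "C = lbr L n (lbr L m x)"
  define D where "D = lbr L (lbr L n x) m"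
  have c: "A \<in> lcar L" "B \<in> lcar L" "C \<in> lcar L" "D \<in> lcar L" using assms unfolding A_def B_def C_def D_def by auto
  have "lbr L (symb m n) x = ladd L (lbr L (lbr L m n) x) (lbr L (lbr L n m) x)"
    by (rule br_addl) (simp_all add: assms)
  also have "\<dots> = ladd L (ladd L A B) (ladd L C D)"
    unfolding A_def B_def C_def D_def by (simp only: right_der0[OF assms(1,2,3)] right_der0[OF assms(1,3,2)])
  also have "\<dots> = ladd L (ladd L B A) (ladd L C D)" using c by (simp add: add_comm[of A])
  also have "\<dots> = ladd L (ladd L B C) (ladd L A D)" by (rule swap4) (fact c)+
  finally show ?thesis unfolding A_def B_def C_def D_def .
qed

end

lemma span_map:
  assumes LL: "lalg L" and MM: "lalg M" and S: "S \<subseteq> lcar L" and W: "lsubspace M W"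
    and fc: "\<forall>x\<in>lcar L. f x \<in> lcar M"
    and fadd: "\<forall>x\<in>lcar L. \<forall>y\<in>lcar L. f (ladd L x y) = ladd M (f x) (f y)"
    and fsm: "\<forall>a. \<forall>x\<in>lcar L. f (lsmul L a x) = lsmul M a (f x)"
    and fS: "\<forall>s\<in>S. f s \<in> W"
    and x: "x \<in> lspan L S"
  shows "f x \<in> W"
proof -
  interpret L: lalg L by fact
  interpret M: lalg M by fact
  have sp: "lsubspace L (lspan L S)" using L.span_sub[OF S] .
  have "f (lzero L) = f (lsmul L 0 (lzero L))" by simp
  also have "\<dots> = lsmul M 0 (f (lzero L))" by (rule fsm[rule_format]) simp
  also have "\<dots> = lzero M" using fc by simp
  finally have f0: "f (lzero L) = lzero M" .
  have "lsubspace L {x \<in> lspan L S. f x \<in> W}"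
    unfolding lsubspace_def
  proof (intro conjI ballI allI)
    show "{x \<in> lspan L S. f x \<in> W} \<subseteq> lcar L" using L.sub_car[OF sp] by blast
    show "lzero L \<in> {x \<in> lspan L S. f x \<in> W}" using L.sub_zero[OF sp] f0 M.sub_zero[OF W] by simp
  next
    fix x y assume "x \<in> {x \<in> lspan L S. f x \<in> W}" "y \<in> {x \<in> lspan L S. f x \<in> W}"
    hence h: "x \<in> lspan L S" "y \<in> lspan L S" "f x \<in> W" "f y \<in> W" by auto
    hence "x \<in> lcar L" "y \<in> lcar L" using L.sub_car[OF sp] by auto
    hence "f (ladd L x y) = ladd M (f x) (f y)" using fadd by blast
    thus "ladd L x y \<in> {x \<in> lspan L S. f x \<in> W}"
      using L.sub_add[OF sp h(1,2)] M.sub_add[OF W h(3,4)] by simp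
  next
    fix a x assume "x \<in> {x \<in> lspan L S. f x \<in> W}"
    hence h: "x \<in> lspan L S" "f x \<in> W" by auto
    hence "x \<in> lcar L" using L.sub_car[OF sp] by auto
    hence "f (lsmul L a x) = lsmul M a (f x)" using fsm by blast
    thus "lsmul L a x \<in> {x \<in> lspan L S. f x \<in> W}"
      using L.sub_smul[OF sp h(1)] M.sub_smul[OF W h(2)] by simp
  qed
  moreover have "S \<subseteq> {x \<in> lspan L S. f x \<in> W}" using L.span_inc fS by blast
  ultimately have "lspan L S \<subseteq> {x \<in> lspan L S. f x \<in> W}" by (rule L.span_least)
  thus ?thesis using x by blast
qed

context lalg begin

lemma ideal_sub: "lideal L I \<Longrightarrow> lsubspace L I" unfolding lideal_def by blast
lemma ideal_car: "lideal L I \<Longrightarrow> I \<subseteq> lcar L" unfolding lideal_def lsubspace_def by blast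
lemma ideal_brl: "lideal L I \<Longrightarrow> x \<in> lcar L \<Longrightarrow> i \<in> I \<Longrightarrow> lbr L x i \<in> I" unfolding lideal_def by blast
lemma ideal_brr: "lideal L I \<Longrightarrow> x \<in> lcar L \<Longrightarrow> i \<in> I \<Longrightarrow> lbr L i x \<in> I" unfolding lideal_def by blast
lemma car_ideal: "lideal L (lcar L)" unfolding lideal_def using car_sub by auto

lemma ideal_lie_br: assumes M: "lideal L M" and N: "lideal L N" shows "lideal L (lie_br L M N)"
proof -
  have Mc: "M \<subseteq> lcar L" and Nc: "N \<subseteq> lcar L" using ideal_car M N by auto
  have sp: "lsubspace L (lie_br L M N)" using lie_br_sub[OF Mc Nc] .
  have Sc: "{symb m n | m n. m \<in> M \<and> n \<in> N} \<subseteq> lcar L" using Mc Nc by (auto intro!: c_add c_br)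
  have la: "lalg L" by (rule lalg_axioms)
  show ?thesis unfolding lideal_def
  proof (intro conjI ballI sp)
    fix x i assume x: "x \<in> lcar L" and i: "i \<in> lie_br L M N"
    have i': "i \<in> lspan L {symb m n |m n. m \<in> M \<and> n \<in> N}" using i unfolding lie_br_def .
    show "lbr L x i \<in> lie_br L M N"
      apply (rule span_map[of L L "{symb m n |m n. m \<in> M \<and> n \<in> N}" "lie_br L M N" "lbr L x" i])
      apply (rule la)
      apply (rule la)
      apply (rule Sc)
      apply (rule sp)
      subgoal using x by auto
      subgoal using x by (auto simp: br_addr)
      subgoal using x by (auto simp: br_smulr)
      subgoal
      proof (clarify)
        fix m n assume m: "m \<in> M" and n: "n \<in> N"
        have "m \<in> lcar L" "n \<in> lcar L" using m n Mc Nc by auto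
        hence "lbr L x (symb m n) = lzero L" using left_ann x by blast
        thus "lbr L x (symb m n) \<in> lie_br L M N" using sub_zero[OF sp] by simp
      qed
      by (rule i')
    show "lbr L i x \<in> lie_br L M N"
      apply (rule span_map[of L L "{symb m n |m n. m \<in> M \<and> n \<in> N}" "lie_br L M N" "\<lambda>i. lbr L i x" i])
      apply (rule la)
      apply (rule la)
      apply (rule Sc)
      apply (rule sp)
      subgoal using x by auto
      subgoal using x by (auto simp: br_addl)
      subgoal using x by (auto simp: br_smull)
      subgoal
      proof (clarify)
        fix m n assume m: "m \<in> M" and n: "n \<in> N"
        have c: "m \<in> lcar L" "n \<in> lcar L" using m n Mc Nc by auto
        have "lbr L (symb m n) x = ladd L (symb (lbr L m x) n) (symb m (lbr L n x))"
          using right_der[OF x c] .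
        moreover have "symb (lbr L m x) n \<in> lie_br L M N" using lie_br_gen[OF ideal_brr[OF M x m] n] .
        moreover have "symb m (lbr L n x) \<in> lie_br L M N" using lie_br_gen[OF m ideal_brr[OF N x n]] .
        ultimately show "lbr L (symb m n) x \<in> lie_br L M N"
          using sub_add[OF sp] by simp
      qed
      by (rule i')
  qed
qed

lemma lie_br_in_left: assumes M: "lideal L M" and N: "N \<subseteq> lcar L" shows "lie_br L M N \<subseteq> M"
proof (rule lie_br_le[OF ideal_sub[OF M]])
  fix m n assume m: "m \<in> M" and n: "n \<in> N"
  have nc: "n \<in> lcar L" using n N by blast
  show "symb m n \<in> M" by (rule sub_add[OF ideal_sub[OF M] ideal_brr[OF M nc m] ideal_brl[OF M nc m]])
qed
lemma lie_br_in_right: assumes N: "lideal L N" and M: "M \<subseteq> lcar L" shows "lie_br L M N \<subseteq> N"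
proof (rule lie_br_le[OF ideal_sub[OF N]])
  fix m n assume m: "m \<in> M" and n: "n \<in> N"
  have mc: "m \<in> lcar L" using m M by blast
  show "symb m n \<in> N" by (rule sub_add[OF ideal_sub[OF N] ideal_brl[OF N mc n] ideal_brr[OF N mc n]])
qed

lemma lcs_ideal: "lideal L (lcs0 L n)"
  by (induction n) (auto intro: car_ideal ideal_lie_br)
lemma lcs_car: "lcs0 L n \<subseteq> lcar L" using ideal_car lcs_ideal by blast
lemma lcs_sub: "lsubspace L (lcs0 L n)" using ideal_sub lcs_ideal by blast
lemma lcs_decr: "lcs0 L (Suc n) \<subseteq> lcs0 L n"
  using lie_br_in_left[OF lcs_ideal] by simp
lemma lcs_anti: "m \<le> n \<Longrightarrow> lcs0 L n \<subseteq> lcs0 L m"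
proof (induction n rule: dec_induct)
  case (step n) thus ?case using lcs_decr by blast
qed simp

end

locale lhom = L: lalg L + M: lalg M for L :: "('k::field, 'v) leib" and M :: "('k, 'w) leib" +
  fixes h :: "'v \<Rightarrow> 'w"
  assumes hom: "leib_hom L M h"
begin

lemma h_c_ax: "h ` lcar L \<subseteq> lcar M" using hom unfolding leib_hom_def by (elim conjE) assumption
lemma h_add_ax: "\<forall>x\<in>lcar L. \<forall>y\<in>lcar L. h (ladd L x y) = ladd M (h x) (h y)" using hom unfolding leib_hom_def by (elim conjE) assumption
lemma h_smul_ax: "\<forall>a. \<forall>x\<in>lcar L. h (lsmul L a x) = lsmul M a (h x)" using hom unfolding leib_hom_def by (elim conjE) assumption
lemma h_br_ax: "\<forall>x\<in>lcar L. \<forall>y\<in>lcar L. h (lbr L x y) = lbr M (h x) (h y)" using hom unfolding leib_hom_def by (elim conjE) assumption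
lemma h_c[simp]: "x \<in> lcar L \<Longrightarrow> h x \<in> lcar M" using h_c_ax by (rule subsetD) (rule imageI)
lemmas h_add = h_add_ax[rule_format]
lemma h_smul: "x \<in> lcar L \<Longrightarrow> h (lsmul L a x) = lsmul M a (h x)" using h_smul_ax by simp
lemmas h_br = h_br_ax[rule_format]
lemma h_zero[simp]: "h (lzero L) = lzero M"
  using h_smul[of "lzero L" 0] L.smul_zero_sc[of "lzero L"] M.smul_zero_sc[of "h (lzero L)"] by simp
lemma h_neg: "x \<in> lcar L \<Longrightarrow> h (lneg L x) = lneg M (h x)"
  using h_smul[of x "-1"] L.smul_m1 M.smul_m1 by simp

lemma ker_ideal: "lideal L (lkernel L M h)"
  unfolding lideal_def lsubspace_def lkernel_def
  by (auto simp: h_add h_smul h_br)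

lemma h_span: assumes S: "S \<subseteq> lcar L" shows "h ` lspan L S = lspan M (h ` S)"
proof
  have hS: "h ` S \<subseteq> lcar M" using S by auto
  have fS: "\<forall>s\<in>S. h s \<in> lspan M (h ` S)"
  proof
    fix s assume "s \<in> S"
    hence "h s \<in> h ` S" by (rule imageI)
    thus "h s \<in> lspan M (h ` S)" by (rule subsetD[OF M.span_inc])
  qed
  show "h ` lspan L S \<subseteq> lspan M (h ` S)"
  proof
    fix y assume "y \<in> h ` lspan L S"
    then obtain x where x: "x \<in> lspan L S" "y = h x" by blast
    have "h x \<in> lspan M (h ` S)"
      by (rule span_map[OF L.lalg_axioms M.lalg_axioms S M.span_sub[OF hS] _ h_add_ax h_smul_ax fS x(1)]) simp
    thus "y \<in> lspan M (h ` S)" using x by simp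
  qed
  have sp: "lsubspace L (lspan L S)" using L.span_sub[OF S] .
  have spc: "lspan L S \<subseteq> lcar L" using L.sub_car[OF sp] .
  have "lsubspace M (h ` lspan L S)"
    unfolding lsubspace_def
  proof (intro conjI ballI allI)
    show "h ` lspan L S \<subseteq> lcar M" using spc by auto
    have "h (lzero L) \<in> h ` lspan L S" using L.sub_zero[OF sp] by (rule imageI)
    thus "lzero M \<in> h ` lspan L S" by simp
  next
    fix x y assume "x \<in> h ` lspan L S" "y \<in> h ` lspan L S"
    then obtain a b where ab: "a \<in> lspan L S" "b \<in> lspan L S" "x = h a" "y = h b" by blast
    have "h (ladd L a b) = ladd M x y" using ab spc h_add by auto
    moreover have "h (ladd L a b) \<in> h ` lspan L S" using L.sub_add[OF sp ab(1,2)] by (rule imageI)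
    ultimately show "ladd M x y \<in> h ` lspan L S" by simp
  next
    fix c x assume "x \<in> h ` lspan L S"
    then obtain a where ab: "a \<in> lspan L S" "x = h a" by blast
    have "h (lsmul L c a) = lsmul M c x" using ab spc h_smul by auto
    moreover have "h (lsmul L c a) \<in> h ` lspan L S" using L.sub_smul[OF sp ab(1)] by (rule imageI)
    ultimately show "lsmul M c x \<in> h ` lspan L S" by simp
  qed
  moreover have "h ` S \<subseteq> h ` lspan L S" using L.span_inc by (rule image_mono)
  ultimately show "lspan M (h ` S) \<subseteq> h ` lspan L S"
    by (rule M.span_least)
qed

lemma h_lie_br: assumes "A \<subseteq> lcar L" "B \<subseteq> lcar L"
  shows "h ` lie_br L A B = lie_br M (h ` A) (h ` B)"
proof -
  have hs: "\<And>m n. m \<in> lcar L \<Longrightarrow> n \<in> lcar L \<Longrightarrow> h (L.symb m n) = M.symb (h m) (h n)"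
    by (simp add: h_add h_br)
  have "h ` {L.symb m n | m n. m \<in> A \<and> n \<in> B} = {M.symb m n | m n. m \<in> h ` A \<and> n \<in> h ` B}"
  proof (intro equalityI subsetI)
    fix x assume "x \<in> h ` {L.symb m n | m n. m \<in> A \<and> n \<in> B}"
    then obtain m n where mn: "m \<in> A" "n \<in> B" "x = h (L.symb m n)" by blast
    have c: "m \<in> lcar L" "n \<in> lcar L" using mn(1,2) assms by auto
    have e: "x = M.symb (h m) (h n)" using hs[OF c] mn(3) by simp
    have "h m \<in> h ` A" "h n \<in> h ` B" using mn(1,2) by auto
    with e show "x \<in> {M.symb m n | m n. m \<in> h ` A \<and> n \<in> h ` B}" by blast
  next
    fix x assume "x \<in> {M.symb m n | m n. m \<in> h ` A \<and> n \<in> h ` B}"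
    then obtain m' n' where mn': "x = M.symb m' n'" "m' \<in> h ` A" "n' \<in> h ` B" by blast
    then obtain m n where "m \<in> A" "n \<in> B" "m' = h m" "n' = h n" by blast
    hence mn: "m \<in> A" "n \<in> B" "x = M.symb (h m) (h n)" using mn'(1) by auto
    have c: "m \<in> lcar L" "n \<in> lcar L" using mn(1,2) assms by auto
    have e: "x = h (L.symb m n)" using hs[OF c] mn(3) by simp
    have "L.symb m n \<in> {L.symb m n | m n. m \<in> A \<and> n \<in> B}" using mn(1,2) by blast
    with e show "x \<in> h ` {L.symb m n | m n. m \<in> A \<and> n \<in> B}" by (rule image_eqI)
  qed
  moreover have "{L.symb m n | m n. m \<in> A \<and> n \<in> B} \<subseteq> lcar L" using assms by (auto intro!: L.c_add L.c_br)
  ultimately show ?thesis unfolding lie_br_def using h_span by simp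
qed

lemma h_lcs: assumes surj: "h ` lcar L = lcar M" shows "h ` lcs0 L n = lcs0 M n"
proof (induction n)
  case 0 then show ?case using surj by simp
next
  case (Suc n) then show ?case using h_lie_br[OF L.lcs_car] surj by simp
qed

end




lemma ball_img: "(\<forall>X\<in>f ` A. P X) \<longleftrightarrow> (\<forall>x\<in>A. P (f x))" by auto

context lalg begin

lemma q_car: "lcar (quot_alg L I) = lcoset L I ` lcar L" by (simp add: quot_alg_def lquot_def)
lemma q_zero: "lzero (quot_alg L I) = lcoset L I (lzero L)" by (simp add: quot_alg_def)

lemma q_add: assumes I: "lideal L I" and a: "a \<in> lcar L" and b: "b \<in> lcar L"
  shows "ladd (quot_alg L I) (lcoset L I a) (lcoset L I b) = lcoset L I (ladd L a b)"
proof -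
  have Is: "lsubspace L I" using I by (rule ideal_sub)
  obtain i where i: "i \<in> I" "(SOME z. z \<in> lcoset L I a) = ladd L a i" by (rule cos_some[OF Is a])
  obtain j where j: "j \<in> I" "(SOME z. z \<in> lcoset L I b) = ladd L b j" by (rule cos_some[OF Is b])
  have ic: "i \<in> lcar L" "j \<in> lcar L" using i j sub_car[OF Is] by auto
  have "ladd (quot_alg L I) (lcoset L I a) (lcoset L I b) = lcoset L I (ladd L (ladd L a i) (ladd L b j))"
    by (simp add: quot_alg_def i(2) j(2))
  also have "ladd L (ladd L a i) (ladd L b j) = ladd L (ladd L a b) (ladd L i j)"
    by (rule swap4) (fact a ic b)+
  also have "lcoset L I \<dots> = lcoset L I (ladd L a b)"
    by (rule cos_absorb[OF Is]) (simp_all add: a b sub_add[OF Is i(1) j(1)])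
  finally show ?thesis .
qed

lemma q_neg: assumes I: "lideal L I" and a: "a \<in> lcar L"
  shows "lneg (quot_alg L I) (lcoset L I a) = lcoset L I (lneg L a)"
proof -
  have Is: "lsubspace L I" using I by (rule ideal_sub)
  obtain i where i: "i \<in> I" "(SOME z. z \<in> lcoset L I a) = ladd L a i" by (rule cos_some[OF Is a])
  have ic: "i \<in> lcar L" using i sub_car[OF Is] by auto
  have "lneg (quot_alg L I) (lcoset L I a) = lcoset L I (lneg L (ladd L a i))"
    by (simp add: quot_alg_def i(2))
  also have "lneg L (ladd L a i) = ladd L (lneg L a) (lneg L i)" by (rule neg_add_distrib) (fact a ic)+
  also have "lcoset L I \<dots> = lcoset L I (lneg L a)"
    by (rule cos_absorb[OF Is]) (simp_all add: a sub_neg[OF Is i(1)])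
  finally show ?thesis .
qed

lemma q_smul: assumes I: "lideal L I" and a: "a \<in> lcar L"
  shows "lsmul (quot_alg L I) c (lcoset L I a) = lcoset L I (lsmul L c a)"
proof -
  have Is: "lsubspace L I" using I by (rule ideal_sub)
  obtain i where i: "i \<in> I" "(SOME z. z \<in> lcoset L I a) = ladd L a i" by (rule cos_some[OF Is a])
  have ic: "i \<in> lcar L" using i sub_car[OF Is] by auto
  have "lsmul (quot_alg L I) c (lcoset L I a) = lcoset L I (lsmul L c (ladd L a i))"
    by (simp add: quot_alg_def i(2))
  also have "lsmul L c (ladd L a i) = ladd L (lsmul L c a) (lsmul L c i)" by (rule smul_add) (fact a ic)+
  also have "lcoset L I \<dots> = lcoset L I (lsmul L c a)"
    by (rule cos_absorb[OF Is]) (simp_all add: a sub_smul[OF Is i(1)])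
  finally show ?thesis .
qed

lemma q_br: assumes I: "lideal L I" and a: "a \<in> lcar L" and b: "b \<in> lcar L"
  shows "lbr (quot_alg L I) (lcoset L I a) (lcoset L I b) = lcoset L I (lbr L a b)"
proof -
  have Is: "lsubspace L I" using I by (rule ideal_sub)
  obtain i where i: "i \<in> I" "(SOME z. z \<in> lcoset L I a) = ladd L a i" by (rule cos_some[OF Is a])
  obtain j where j: "j \<in> I" "(SOME z. z \<in> lcoset L I b) = ladd L b j" by (rule cos_some[OF Is b])
  have ic: "i \<in> lcar L" "j \<in> lcar L" using i j sub_car[OF Is] by auto
  have "lbr (quot_alg L I) (lcoset L I a) (lcoset L I b) = lcoset L I (lbr L (ladd L a i) (ladd L b j))"
    by (simp add: quot_alg_def i(2) j(2))
  also have "lbr L (ladd L a i) (ladd L b j) = ladd L (lbr L a (ladd L b j)) (lbr L i (ladd L b j))"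
    by (rule br_addl) (simp_all add: a b ic)
  also have "lbr L a (ladd L b j) = ladd L (lbr L a b) (lbr L a j)"
    by (rule br_addr) (simp_all add: a b ic)
  also have "ladd L (ladd L (lbr L a b) (lbr L a j)) (lbr L i (ladd L b j))
      = ladd L (lbr L a b) (ladd L (lbr L a j) (lbr L i (ladd L b j)))"
    by (rule add_assoc) (simp_all add: a b ic)
  also have "lcoset L I \<dots> = lcoset L I (lbr L a b)"
  proof (rule cos_absorb[OF Is])
    show "lbr L a b \<in> lcar L" using a b by simp
    have "lbr L a j \<in> I" by (rule ideal_brl[OF I a j(1)])
    moreover have "lbr L i (ladd L b j) \<in> I" by (rule ideal_brr[OF I _ i(1)]) (simp add: b ic)
    ultimately show "ladd L (lbr L a j) (lbr L i (ladd L b j)) \<in> I" by (rule sub_add[OF Is])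
  qed
  finally show ?thesis .
qed

lemma quot_leib: assumes I: "lideal L I" shows "leibniz_algebra (quot_alg L I)"
  unfolding leibniz_algebra_def q_car q_zero ball_img
  apply (intro conjI allI)
  subgoal by (rule imageI) simp
  subgoal by (auto simp: q_add[OF I])
  subgoal by (auto simp: q_neg[OF I])
  subgoal by (auto simp: q_smul[OF I])
  subgoal by (auto simp: q_br[OF I])
  subgoal by (auto simp: q_add[OF I] add_assoc)
  subgoal by (clarsimp simp: q_add[OF I]) (subst add_comm, simp_all)
  subgoal by (auto simp: q_add[OF I])
  subgoal by (auto simp: q_add[OF I] q_neg[OF I])
  subgoal by (auto simp: q_add[OF I] q_smul[OF I] smul_adds)
  subgoal by (auto simp: q_add[OF I] q_smul[OF I] smul_add)
  subgoal by (auto simp: q_smul[OF I] smul_mult)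
  subgoal by (auto simp: q_smul[OF I])
  subgoal by (auto simp: q_add[OF I] q_br[OF I] br_addl)
  subgoal by (auto simp: q_add[OF I] q_br[OF I] br_addr)
  subgoal by (auto simp: q_smul[OF I] q_br[OF I] br_smull)
  subgoal by (auto simp: q_smul[OF I] q_br[OF I] br_smulr)
  subgoal by (auto simp: q_add[OF I] q_neg[OF I] q_br[OF I] leib)
  done

end




theorem mainTheorem7:
  fixes F :: "('k::field, 'v) leib" and G :: "('k, 'w) leib" and \<pi> :: "'v \<Rightarrow> 'w" and k :: nat
  assumes half: "(2::'k) \<noteq> 0"
    and G_alg: "leibniz_algebra G"
    and nil: "lie_nilpotent_class G k" and k2: "k \<ge> 2"
    and pres: "free_presentation F G \<pi>"
  shows "let r = lkernel F G \<pi>;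
             fr = lie_br F (lcar F) r;
             Q = quot_alg G (lie_lcs G k);
             \<pi>Q = (\<lambda>x. lcoset G (lie_lcs G k) (\<pi> x));
             s = lkernel F Q \<pi>Q;
             fs = lie_br F (lcar F) s;
             A = lquot F (lie_lcs F (k + 1)) (fr \<inter> lie_lcs F (k + 1));
             MG = schur_lie F G \<pi>;
             MQ = schur_lie F Q \<pi>Q
         in free_presentation F Q \<pi>Q \<and>
            (\<exists>\<Phi>1 \<Phi>2 \<Phi>3.
               (\<forall>x\<in>lie_lcs F (k + 1). \<Phi>1 (lcoset F (fr \<inter> lie_lcs F (k + 1)) x) = lcoset F fr x) \<and>
               (\<forall>x\<in>r \<inter> lie_br F (lcar F) (lcar F). \<Phi>2 (lcoset F fr x) = lcoset F fs x) \<and>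
               (\<forall>x\<in>s \<inter> lie_br F (lcar F) (lcar F). \<Phi>3 (lcoset F fs x) = \<pi> x) \<and>
               inj_on \<Phi>1 A \<and>
               \<Phi>1 ` A = {C \<in> MG. \<Phi>2 C = lcoset F fs (lzero F)} \<and>
               \<Phi>2 ` MG = {C \<in> MQ. \<Phi>3 C = lzero G} \<and>
               \<Phi>3 ` MQ = lie_lcs G k)"
proof -
  have F_alg: "leibniz_algebra F" and Ffree: "free_leib F" and hom: "leib_hom F G \<pi>"
    and surj: "\<pi> ` lcar F = lcar G"
    using pres unfolding free_presentation_def by auto
  interpret F: lalg F by (rule lalg.intro[OF F_alg])
  interpret G: lalg G by (rule lalg.intro[OF G_alg])
  interpret P: lhom F G \<pi> by (rule lhom.intro[OF F.lalg_axioms G.lalg_axioms]) (rule lhom_axioms.intro[OF hom])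

  define I where "I = lie_lcs G k"
  have I_eq: "I = lcs0 G (k - 1)" unfolding I_def lie_lcs_def ..
  have Iid: "lideal G I" unfolding I_eq by (rule G.lcs_ideal)
  have Is: "lsubspace G I" using Iid by (rule G.ideal_sub)
  define Q where "Q = quot_alg G I"
  define \<pi>Q where "\<pi>Q = (\<lambda>x. lcoset G I (\<pi> x))"
  have Q_alg: "leibniz_algebra Q" unfolding Q_def by (rule G.quot_leib[OF Iid])
  interpret Qa: lalg Q by (rule lalg.intro[OF Q_alg])
  have homQ: "leib_hom F Q \<pi>Q"
    unfolding leib_hom_def
  proof (intro conjI ballI allI)
    show "\<pi>Q ` lcar F \<subseteq> lcar Q" unfolding Q_def \<pi>Q_def G.q_car by auto
  next
    fix x y assume x: "x \<in> lcar F" and y: "y \<in> lcar F"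
    show "\<pi>Q (ladd F x y) = ladd Q (\<pi>Q x) (\<pi>Q y)"
      unfolding Q_def \<pi>Q_def using x y by (simp add: G.q_add[OF Iid] P.h_add)
    show "\<pi>Q (lbr F x y) = lbr Q (\<pi>Q x) (\<pi>Q y)"
      unfolding Q_def \<pi>Q_def using x y by (simp add: G.q_br[OF Iid] P.h_br)
  next
    fix a x assume x: "x \<in> lcar F"
    show "\<pi>Q (lsmul F a x) = lsmul Q a (\<pi>Q x)"
      unfolding Q_def \<pi>Q_def using x by (simp add: G.q_smul[OF Iid] P.h_smul)
  qed
  have surjQ: "\<pi>Q ` lcar F = lcar Q"
    unfolding Q_def \<pi>Q_def G.q_car by (simp add: image_image[symmetric] surj)
  have presQ: "free_presentation F Q \<pi>Q"
    unfolding free_presentation_def using F_alg Ffree Q_alg homQ surjQ by blast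
  interpret PQ: lhom F Q \<pi>Q by (rule lhom.intro[OF F.lalg_axioms Qa.lalg_axioms]) (rule lhom_axioms.intro[OF homQ])

  define r where "r = lkernel F G \<pi>"
  define fr where "fr = lie_br F (lcar F) r"
  define s where "s = lkernel F Q \<pi>Q"
  define fs where "fs = lie_br F (lcar F) s"
  define Fk where "Fk = lcs0 F (k - 1)"
  define Fk1 where "Fk1 = lie_lcs F (k + 1)"
  define FF where "FF = lie_br F (lcar F) (lcar F)"
  have Fk1_eq: "Fk1 = lcs0 F k" unfolding Fk1_def lie_lcs_def by simp
  have Fk1_eq2: "Fk1 = lie_br F Fk (lcar F)"
    unfolding Fk1_eq Fk_def using k2 by (cases k) auto
  have FF_eq: "FF = lcs0 F 1" unfolding FF_def by simp

  have r_id: "lideal F r" unfolding r_def by (rule P.ker_ideal)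
  have r_sub: "lsubspace F r" using r_id by (rule F.ideal_sub)
  have rc: "r \<subseteq> lcar F" using r_id by (rule F.ideal_car)
  have s_id: "lideal F s" unfolding s_def by (rule PQ.ker_ideal)
  have s_sub: "lsubspace F s" using s_id by (rule F.ideal_sub)
  have sc: "s \<subseteq> lcar F" using s_id by (rule F.ideal_car)
  have r_mem: "x \<in> r \<longleftrightarrow> x \<in> lcar F \<and> \<pi> x = lzero G" for x unfolding r_def lkernel_def by simp
  have s_mem: "x \<in> s \<longleftrightarrow> x \<in> lcar F \<and> \<pi> x \<in> I" for x
  proof -
    have "x \<in> s \<longleftrightarrow> x \<in> lcar F \<and> lcoset G I (\<pi> x) = lcoset G I (lzero G)"
      unfolding s_def lkernel_def \<pi>Q_def Q_def G.q_zero by simp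
    also have "\<dots> \<longleftrightarrow> x \<in> lcar F \<and> \<pi> x \<in> I"
    proof (cases "x \<in> lcar F")
      case True
      hence "lcoset G I (\<pi> x) = lcoset G I (lzero G) \<longleftrightarrow> ladd G (\<pi> x) (lneg G (lzero G)) \<in> I"
        by (intro G.cos_eq_iff[OF Is]) simp_all
      also have "ladd G (\<pi> x) (lneg G (lzero G)) = \<pi> x" using True by simp
      finally show ?thesis using True by simp
    qed simp
    finally show ?thesis .
  qed
  have piFk: "\<pi> ` Fk = I" unfolding Fk_def I_eq by (rule P.h_lcs[OF surj])
  have piFk1: "\<pi> ` Fk1 = {lzero G}"
    unfolding Fk1_eq using P.h_lcs[OF surj, of k] nil unfolding lie_nilpotent_class_def lie_lcs_def by simp
  have Fkc: "Fk \<subseteq> lcar F" unfolding Fk_def by (rule F.lcs_car)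
  have Fk1c: "Fk1 \<subseteq> lcar F" unfolding Fk1_eq by (rule F.lcs_car)
  have Fk1_sub: "lsubspace F Fk1" unfolding Fk1_eq by (rule F.lcs_sub)
  have r_s: "r \<subseteq> s"
  proof
    fix x assume "x \<in> r"
    hence "x \<in> lcar F" "\<pi> x = lzero G" using r_mem by auto
    thus "x \<in> s" using s_mem G.sub_zero[OF Is] by simp
  qed
  have Fk_s: "Fk \<subseteq> s"
  proof
    fix x assume x: "x \<in> Fk"
    hence "\<pi> x \<in> I" using piFk by blast
    thus "x \<in> s" using x Fkc s_mem by blast
  qed
  have Fk1_r: "Fk1 \<subseteq> r"
  proof
    fix x assume x: "x \<in> Fk1"
    hence "\<pi> x = lzero G" using piFk1 by blast
    thus "x \<in> r" using x Fk1c r_mem by blast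
  qed
  have Fk_FF: "Fk \<subseteq> FF" unfolding FF_eq Fk_def by (rule F.lcs_anti) (use k2 in simp)
  have Fk1_FF: "Fk1 \<subseteq> FF" unfolding FF_eq Fk1_eq by (rule F.lcs_anti) (use k2 in simp)
  have fr_sub: "lsubspace F fr" unfolding fr_def by (rule F.lie_br_sub[OF _ rc]) simp
  have fs_sub: "lsubspace F fs" unfolding fs_def by (rule F.lie_br_sub[OF _ sc]) simp
  have frc: "fr \<subseteq> lcar F" using fr_sub by (rule F.sub_car)
  have fsc: "fs \<subseteq> lcar F" using fs_sub by (rule F.sub_car)
  have fr_r: "fr \<subseteq> r" unfolding fr_def by (rule F.lie_br_in_right[OF r_id]) simp
  have fr_fs: "fr \<subseteq> fs" unfolding fr_def fs_def by (rule F.lie_br_mono[OF _ r_s _ sc]) simp_all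
  have Fk1_fs: "Fk1 \<subseteq> fs"
    unfolding Fk1_eq2
  proof (rule F.lie_br_le[OF fs_sub])
    fix m n assume m: "m \<in> Fk" and n: "n \<in> lcar F"
    have "F.symb n m \<in> fs" unfolding fs_def using Fk_s m n by (intro F.lie_br_gen) auto
    moreover have "F.symb m n = F.symb n m" using m n Fkc by (intro F.symb_comm) auto
    ultimately show "F.symb m n \<in> fs" by simp
  qed
  have s_dec: "\<exists>y t. y \<in> Fk \<and> t \<in> r \<and> x = ladd F y t" if x: "x \<in> s" for x
  proof -
    have xc: "x \<in> lcar F" and px: "\<pi> x \<in> I" using x s_mem by auto
    then obtain y where y: "y \<in> Fk" "\<pi> y = \<pi> x" using piFk by (metis imageE)
    have yc: "y \<in> lcar F" using y Fkc by blast
    define t where "t = ladd F x (lneg F y)"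
    have tc: "t \<in> lcar F" unfolding t_def using xc yc by simp
    have "\<pi> t = ladd G (\<pi> x) (lneg G (\<pi> y))" unfolding t_def using xc yc by (simp add: P.h_add P.h_neg)
    also have "\<dots> = lzero G" using y(2) xc by simp
    finally have "t \<in> r" using tc r_mem by blast
    moreover have "ladd F y t = x" unfolding t_def using xc yc by (rule F.add_neg_cancel3)
    ultimately show ?thesis using y(1) by blast
  qed
  have fs_sum: "fs \<subseteq> F.ssum Fk1 fr"
    unfolding fs_def
  proof (rule F.lie_br_le[OF F.sub_ssum[OF Fk1_sub fr_sub]])
    fix f x assume f: "f \<in> lcar F" and x: "x \<in> s"
    obtain y t where yt: "y \<in> Fk" "t \<in> r" "x = ladd F y t" using s_dec[OF x] by blast
    have yc: "y \<in> lcar F" and tc: "t \<in> lcar F" using yt Fkc rc by auto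
    have "F.symb f x = ladd F (ladd F (lbr F f y) (lbr F f t)) (ladd F (lbr F y f) (lbr F t f))"
      unfolding yt(3) using f yc tc by (simp add: F.br_addl F.br_addr)
    also have "\<dots> = ladd F (ladd F (lbr F f y) (lbr F y f)) (ladd F (lbr F f t) (lbr F t f))"
      by (rule F.swap4) (simp_all add: f yc tc)
    also have "ladd F (lbr F f y) (lbr F y f) = F.symb y f" by (rule F.add_comm) (simp_all add: f yc)
    finally have e: "F.symb f x = ladd F (F.symb y f) (F.symb f t)" .
    have "F.symb y f \<in> Fk1" unfolding Fk1_eq2 using yt(1) f by (rule F.lie_br_gen)
    moreover have "F.symb f t \<in> fr" unfolding fr_def using f yt(2) by (rule F.lie_br_gen)
    ultimately show "F.symb f x \<in> F.ssum Fk1 fr" unfolding e F.ssum_def by blast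
  qed
  have fs_r: "fs \<subseteq> r"
  proof
    fix x assume "x \<in> fs"
    hence "x \<in> F.ssum Fk1 fr" using fs_sum by blast
    then obtain a b where ab: "x = ladd F a b" "a \<in> Fk1" "b \<in> fr" unfolding F.ssum_def by blast
    have "a \<in> r" "b \<in> r" using ab Fk1_r fr_r by auto
    thus "x \<in> r" unfolding ab(1) by (rule F.sub_add[OF r_sub])
  qed
  have B'_sub: "lsubspace F (fr \<inter> Fk1)" by (rule F.sub_inter[OF fr_sub Fk1_sub])

  define \<Phi>1 where "\<Phi>1 = (\<lambda>C. lcoset F fr (SOME z. z \<in> C))"
  define \<Phi>2 where "\<Phi>2 = (\<lambda>C. lcoset F fs (SOME z. z \<in> C))"
  define \<Phi>3 where "\<Phi>3 = (\<lambda>C. \<pi> (SOME z. z \<in> C))"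
  have spec1: "\<Phi>1 (lcoset F (fr \<inter> Fk1) x) = lcoset F fr x" if "x \<in> lcar F" for x
    unfolding \<Phi>1_def by (rule F.cos_some_cos[OF fr_sub B'_sub _ that]) blast
  have spec2: "\<Phi>2 (lcoset F fr x) = lcoset F fs x" if "x \<in> lcar F" for x
    unfolding \<Phi>2_def by (rule F.cos_some_cos[OF fs_sub fr_sub fr_fs that])
  have spec3: "\<Phi>3 (lcoset F fs x) = \<pi> x" if x: "x \<in> lcar F" for x
  proof -
    obtain b where b: "b \<in> fs" "(SOME z. z \<in> lcoset F fs x) = ladd F x b" by (rule F.cos_some[OF fs_sub x])
    have "b \<in> r" using b(1) fs_r by blast
    hence bc: "b \<in> lcar F" and pb: "\<pi> b = lzero G" using r_mem by auto
    have "\<Phi>3 (lcoset F fs x) = \<pi> (ladd F x b)" unfolding \<Phi>3_def b(2) ..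
    also have "\<dots> = \<pi> x" using x bc pb by (simp add: P.h_add)
    finally show ?thesis .
  qed
  have cos_eq: "lcoset F B x = lcoset F B y \<longleftrightarrow> ladd F x (lneg F y) \<in> B"
    if "lsubspace F B" "x \<in> lcar F" "y \<in> lcar F" for B x y
    using F.cos_eq_iff[OF that] .
  have cos0: "lcoset F B x = lcoset F B (lzero F) \<longleftrightarrow> x \<in> B"
    if B: "lsubspace F B" and x: "x \<in> lcar F" for B x
    using cos_eq[OF B x F.c_zero] x by simp

  define A where "A = lquot F Fk1 (fr \<inter> Fk1)"
  define MG where "MG = lquot F (r \<inter> FF) fr"
  define MQ where "MQ = lquot F (s \<inter> FF) fs"
  have MG_eq: "schur_lie F G \<pi> = MG" unfolding MG_def schur_lie_def r_def fr_def FF_def ..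
  have MQ_eq: "schur_lie F Q \<pi>Q = MQ" unfolding MQ_def schur_lie_def s_def fs_def FF_def ..

  have inj: "inj_on \<Phi>1 A"
  proof (rule inj_onI)
    fix C1 C2 assume "C1 \<in> A" "C2 \<in> A" and eq: "\<Phi>1 C1 = \<Phi>1 C2"
    then obtain x1 x2 where x: "x1 \<in> Fk1" "x2 \<in> Fk1" "C1 = lcoset F (fr \<inter> Fk1) x1" "C2 = lcoset F (fr \<inter> Fk1) x2"
      unfolding A_def lquot_def by blast
    have xc: "x1 \<in> lcar F" "x2 \<in> lcar F" using x Fk1c by auto
    have "lcoset F fr x1 = lcoset F fr x2" using eq unfolding x(3,4) spec1[OF xc(1)] spec1[OF xc(2)] .
    hence "ladd F x1 (lneg F x2) \<in> fr" using cos_eq[OF fr_sub xc] by simp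
    moreover have "ladd F x1 (lneg F x2) \<in> Fk1"
      by (rule F.sub_add[OF Fk1_sub x(1) F.sub_neg[OF Fk1_sub x(2)]])
    ultimately have "ladd F x1 (lneg F x2) \<in> fr \<inter> Fk1" by blast
    thus "C1 = C2" unfolding x(3,4) using cos_eq[OF B'_sub xc] by simp
  qed
  have im1: "\<Phi>1 ` A = {C \<in> MG. \<Phi>2 C = lcoset F fs (lzero F)}"
  proof (intro equalityI subsetI)
    fix C assume "C \<in> \<Phi>1 ` A"
    then obtain x where x: "x \<in> Fk1" "C = \<Phi>1 (lcoset F (fr \<inter> Fk1) x)" unfolding A_def lquot_def by blast
    have xc: "x \<in> lcar F" using x Fk1c by blast
    have C: "C = lcoset F fr x" using x(2) spec1[OF xc] by simp
    have "x \<in> r \<inter> FF" using x(1) Fk1_r Fk1_FF by blast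
    hence "C \<in> MG" unfolding C MG_def lquot_def by (rule imageI)
    moreover have "\<Phi>2 C = lcoset F fs (lzero F)" unfolding C spec2[OF xc] cos0[OF fs_sub xc]
      using x(1) Fk1_fs by blast
    ultimately show "C \<in> {C \<in> MG. \<Phi>2 C = lcoset F fs (lzero F)}" by blast
  next
    fix C assume "C \<in> {C \<in> MG. \<Phi>2 C = lcoset F fs (lzero F)}"
    then obtain x where x: "x \<in> r \<inter> FF" "C = lcoset F fr x" and e: "\<Phi>2 C = lcoset F fs (lzero F)"
      unfolding MG_def lquot_def by blast
    have xc: "x \<in> lcar F" using x rc by blast
    have "x \<in> fs" using e unfolding x(2) spec2[OF xc] cos0[OF fs_sub xc] .
    hence "x \<in> F.ssum Fk1 fr" using fs_sum by blast
    then obtain a b where ab: "x = ladd F a b" "a \<in> Fk1" "b \<in> fr" unfolding F.ssum_def by blast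
    have ac: "a \<in> lcar F" using ab Fk1c by blast
    have "C = lcoset F fr a" unfolding x(2) ab(1) by (rule F.cos_absorb[OF fr_sub ac ab(3)])
    also have "\<dots> = \<Phi>1 (lcoset F (fr \<inter> Fk1) a)" using spec1[OF ac] by simp
    finally have "C = \<Phi>1 (lcoset F (fr \<inter> Fk1) a)" .
    moreover have "lcoset F (fr \<inter> Fk1) a \<in> A" unfolding A_def lquot_def using ab(2) by (rule imageI)
    ultimately show "C \<in> \<Phi>1 ` A" by (rule image_eqI)
  qed
  have im2: "\<Phi>2 ` MG = {C \<in> MQ. \<Phi>3 C = lzero G}"
  proof (intro equalityI subsetI)
    fix C assume "C \<in> \<Phi>2 ` MG"
    then obtain x where x: "x \<in> r \<inter> FF" "C = \<Phi>2 (lcoset F fr x)" unfolding MG_def lquot_def by blast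
    have xc: "x \<in> lcar F" using x rc by blast
    have C: "C = lcoset F fs x" using x(2) spec2[OF xc] by simp
    have "x \<in> s \<inter> FF" using x(1) r_s by blast
    hence "C \<in> MQ" unfolding C MQ_def lquot_def by (rule imageI)
    moreover have "\<Phi>3 C = lzero G" unfolding C spec3[OF xc] using x(1) r_mem by blast
    ultimately show "C \<in> {C \<in> MQ. \<Phi>3 C = lzero G}" by blast
  next
    fix C assume "C \<in> {C \<in> MQ. \<Phi>3 C = lzero G}"
    then obtain x where x: "x \<in> s \<inter> FF" "C = lcoset F fs x" and e: "\<Phi>3 C = lzero G"
      unfolding MQ_def lquot_def by blast
    have xc: "x \<in> lcar F" using x sc by blast
    have "\<pi> x = lzero G" using e unfolding x(2) spec3[OF xc] .
    hence "x \<in> r \<inter> FF" using x(1) xc r_mem by blast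
    hence "lcoset F fr x \<in> MG" unfolding MG_def lquot_def by (rule imageI)
    moreover have "C = \<Phi>2 (lcoset F fr x)" unfolding x(2) spec2[OF xc] ..
    ultimately show "C \<in> \<Phi>2 ` MG" by (rule rev_image_eqI)
  qed
  have im3: "\<Phi>3 ` MQ = I"
  proof (intro equalityI subsetI)
    fix g assume "g \<in> \<Phi>3 ` MQ"
    then obtain x where x: "x \<in> s \<inter> FF" "g = \<Phi>3 (lcoset F fs x)" unfolding MQ_def lquot_def by blast
    have xc: "x \<in> lcar F" using x sc by blast
    have "g = \<pi> x" using x(2) spec3[OF xc] by simp
    thus "g \<in> I" using x(1) s_mem by blast
  next
    fix g assume "g \<in> I"
    then obtain y where y: "y \<in> Fk" "g = \<pi> y" using piFk by blast
    have yc: "y \<in> lcar F" using y Fkc by blast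
    have "y \<in> s \<inter> FF" using y(1) Fk_s Fk_FF by blast
    hence "lcoset F fs y \<in> MQ" unfolding MQ_def lquot_def by (rule imageI)
    moreover have "g = \<Phi>3 (lcoset F fs y)" unfolding y(2) spec3[OF yc] ..
    ultimately show "g \<in> \<Phi>3 ` MQ" by (rule rev_image_eqI)
  qed
  have main: "free_presentation F Q \<pi>Q \<and>
            (\<exists>\<Phi>1 \<Phi>2 \<Phi>3.
               (\<forall>x\<in>Fk1. \<Phi>1 (lcoset F (fr \<inter> Fk1) x) = lcoset F fr x) \<and>
               (\<forall>x\<in>r \<inter> FF. \<Phi>2 (lcoset F fr x) = lcoset F fs x) \<and>
               (\<forall>x\<in>s \<inter> FF. \<Phi>3 (lcoset F fs x) = \<pi> x) \<and>
               inj_on \<Phi>1 A \<and>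
               \<Phi>1 ` A = {C \<in> MG. \<Phi>2 C = lcoset F fs (lzero F)} \<and>
               \<Phi>2 ` MG = {C \<in> MQ. \<Phi>3 C = lzero G} \<and>
               \<Phi>3 ` MQ = I)"
  proof (intro conjI exI)
    show "free_presentation F Q \<pi>Q" by (rule presQ)
    show "\<forall>x\<in>Fk1. \<Phi>1 (lcoset F (fr \<inter> Fk1) x) = lcoset F fr x" using spec1 Fk1c by blast
    show "\<forall>x\<in>r \<inter> FF. \<Phi>2 (lcoset F fr x) = lcoset F fs x" using spec2 rc by blast
    show "\<forall>x\<in>s \<inter> FF. \<Phi>3 (lcoset F fs x) = \<pi> x" using spec3 sc by blast
  qed (fact inj im1 im2 im3)+
  show ?thesis
    unfolding Let_def
    using main unfolding MG_eq[symmetric] MQ_eq[symmetric] A_def Fk1_def FF_def fs_def s_def fr_def r_def \<pi>Q_def Q_def I_def .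
qed


end
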